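(* Let $q>7$ be a prime and $a$ a positive integer. Then $$\nu_q\Big(\prod_{p\le a}(p-1)\Big)\le \frac{0.23\,a}{q-1}+\frac{7\log a}{\log q},$$ where the product is over primes $p\le a$.
   Context: For a prime $q$ and nonzero integer $n$, $\nu_q(n)$ denotes the exponent of $q$ in the prime factorisation of $n$. The letter $p$ denotes primes. *)

theory Defs
  imports "HOL-Computational_Algebra.Primes" Complex_Main
begin

end

theory Submission
  imports Defs "HOL-Number_Theory.Cong"
begin


lemma cnt_upper:
  fixes Q d I :: nat
  assumes cop: "coprime (2*Q) d" and d: "d > 0"
  shows "d * card {i\<in>{1..I}. d dvd 1+2*Q*i} \<le> I + d"
proof -
  let ?S = "{i\<in>{1..I}. d dvd 1+2*Q*i}"
  have inj: "inj_on (\<lambda>i. i div d) ?S"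
  proof (rule inj_onI)
    fix x y assume x: "x \<in> ?S" and y: "y \<in> ?S" and e: "x div d = y div d"
    have "[1 + 2*Q*x = 0] (mod d)" "[1 + 2*Q*y = 0] (mod d)"
      using x y by (auto simp: cong_0_iff)
    hence "[1 + 2*Q*x = 1 + 2*Q*y] (mod d)" by (metis cong_sym cong_trans)
    hence "[2*Q*x = 2*Q*y] (mod d)" by (metis cong_add_lcancel_nat)
    hence "[x = y] (mod d)" using cong_mult_lcancel_nat[OF cop] by simp
    hence "x mod d = y mod d" by (simp add: cong_def)
    thus "x = y" using e by (metis div_mult_mod_eq)
  qed
  have sub: "(\<lambda>i. i div d) ` ?S \<subseteq> {..I div d}"
    by (auto intro: div_le_mono)
  have "card ?S = card ((\<lambda>i. i div d) ` ?S)" using card_image[OF inj] by simp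
  also have "\<dots> \<le> card {..I div d}" by (rule card_mono[OF _ sub]) simp
  finally have "card ?S \<le> I div d + 1" by simp
  hence "d * card ?S \<le> d * (I div d) + d" by (metis add_mult_distrib2 mult.right_neutral mult_le_mono2)
  also have "d * (I div d) \<le> I" by simp
  finally show ?thesis by simp
qed

lemma cnt_lower:
  fixes Q d I :: nat
  assumes cop: "coprime (2*Q) d" and d: "d > 0"
  shows "I div d \<le> card {i\<in>{1..I}. d dvd 1+2*Q*i}"
proof -
  let ?S = "{i\<in>{1..I}. d dvd 1+2*Q*i}"
  obtain y where y: "[2*Q*y = Suc 0] (mod d)" using cong_solve_coprime_nat[OF cop] by blast
  define x0' where "x0' = y*(d-1)"
  have "[2*Q*x0' = 1*(d-1)] (mod d)" unfolding x0'_def using cong_mult[OF y cong_refl[of "d-1"]]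
    by (simp add: mult.assoc)
  hence "[1 + 2*Q*x0' = 1 + (d-1)] (mod d)" by (metis cong_add_lcancel_nat mult_1)
  hence c0: "[1 + 2*Q*x0' = 0] (mod d)" using d by (simp add: cong_def)
  define x0 where "x0 = (if x0' mod d = 0 then d else x0' mod d)"
  have x0r: "1 \<le> x0" "x0 \<le> d" unfolding x0_def using d
    by (auto simp: less_imp_le[OF mod_less_divisor] intro: Suc_leI)
  have "[x0 = x0'] (mod d)" unfolding x0_def by (auto simp: cong_def)
  hence "[1 + 2*Q*x0 = 1 + 2*Q*x0'] (mod d)" by (intro cong_add cong_mult cong_refl)
  hence c1: "d dvd 1 + 2*Q*x0" using c0 by (metis cong_0_iff cong_trans)
  have inj: "inj_on (\<lambda>t. x0 + d*t) {..<I div d}" using d by (auto simp: inj_on_def)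
  have sub: "(\<lambda>t. x0 + d*t) ` {..<I div d} \<subseteq> ?S"
  proof
    fix z assume "z \<in> (\<lambda>t. x0 + d*t) ` {..<I div d}"
    then obtain t where t: "t < I div d" and z: "z = x0 + d*t" by auto
    have "d*(t+1) \<le> d*(I div d)" using t by (intro mult_le_mono2) simp
    also have "\<dots> \<le> I" by simp
    finally have "z \<le> I" using z x0r by simp
    moreover have "d dvd 1 + 2*Q*z" using c1 unfolding z
      by (metis (no_types) add.assoc distrib_left dvd_add dvd_triv_left mult.left_commute)
    ultimately show "z \<in> ?S" using x0r z by auto
  qed
  have "I div d = card ((\<lambda>t. x0 + d*t) ` {..<I div d})" using card_image[OF inj] by simp
  also have "\<dots> \<le> card ?S" by (rule card_mono[OF _ sub]) simp
  finally show ?thesis .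
qed



lemma incl_excl3:
  assumes "finite B" "finite C" "finite D"
  shows "int (card (B \<union> C \<union> D)) = int (card B) + int (card C) + int (card D) - int (card (B \<inter> C)) - int (card (B \<inter> D)) - int (card (C \<inter> D)) + int (card (B \<inter> C \<inter> D))"
proof -
  have 1: "card (B \<union> C) + card (B \<inter> C) = card B + card C" using card_Un_Int assms by metis
  have 2: "card (B \<union> C \<union> D) + card ((B \<union> C) \<inter> D) = card (B \<union> C) + card D"
    using card_Un_Int[of "B \<union> C" D] assms by simp
  have e: "(B \<union> C) \<inter> D = (B \<inter> D) \<union> (C \<inter> D)" by blast
  have e2: "(B \<inter> D) \<inter> (C \<inter> D) = B \<inter> C \<inter> D" by blast
  have 3: "card ((B \<inter> D) \<union> (C \<inter> D)) + card (B \<inter> C \<inter> D) = card (B \<inter> D) + card (C \<inter> D)"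
    using card_Un_Int[of "B \<inter> D" "C \<inter> D"] assms e2 by simp
  have h2: "card (B \<union> C \<union> D) + card ((B \<inter> D) \<union> (C \<inter> D)) = card (B \<union> C) + card D"
    using 2 e by simp
  show ?thesis using 1 h2 3 by linarith
qed

lemma cnt_good:
  fixes Q I :: nat
  assumes c3: "coprime (2*Q) 3" and c5: "coprime (2*Q) 5" and c7: "coprime (2*Q) 7"
  shows "105 * card {i\<in>{1..I}. \<not> 3 dvd 1+2*Q*i \<and> \<not> 5 dvd 1+2*Q*i \<and> \<not> 7 dvd 1+2*Q*i} \<le> 48*I + 735"
proof -
  define D where "D d = {i\<in>{1..I}. d dvd 1+2*Q*i}" for d :: nat
  have c15: "coprime (2*Q) (15::nat)" using c3 c5 coprime_mult_right_iff[of "2*Q" 3 5] by simp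
  have c21: "coprime (2*Q) (21::nat)" using c3 c7 coprime_mult_right_iff[of "2*Q" 3 7] by simp
  have c35: "coprime (2*Q) (35::nat)" using c5 c7 coprime_mult_right_iff[of "2*Q" 5 7] by simp
  have c105: "coprime (2*Q) (105::nat)" using c15 c7 coprime_mult_right_iff[of "2*Q" 15 7] by simp
  have d15: "D 3 \<inter> D 5 = D 15" unfolding D_def
  proof -
    have "\<And>n::nat. 3 dvd n \<and> 5 dvd n \<longleftrightarrow> 15 dvd n" by presburger
    thus "{i \<in> {1..I}. 3 dvd 1 + 2 * Q * i} \<inter> {i \<in> {1..I}. 5 dvd 1 + 2 * Q * i} = {i \<in> {1..I}. 15 dvd 1 + 2 * Q * i}" by blast
  qed
  have d21: "D 3 \<inter> D 7 = D 21" unfolding D_def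
  proof -
    have "\<And>n::nat. 3 dvd n \<and> 7 dvd n \<longleftrightarrow> 21 dvd n" by presburger
    thus "{i \<in> {1..I}. 3 dvd 1 + 2 * Q * i} \<inter> {i \<in> {1..I}. 7 dvd 1 + 2 * Q * i} = {i \<in> {1..I}. 21 dvd 1 + 2 * Q * i}" by blast
  qed
  have d35: "D 5 \<inter> D 7 = D 35" unfolding D_def
  proof -
    have "\<And>n::nat. 5 dvd n \<and> 7 dvd n \<longleftrightarrow> 35 dvd n" by presburger
    thus "{i \<in> {1..I}. 5 dvd 1 + 2 * Q * i} \<inter> {i \<in> {1..I}. 7 dvd 1 + 2 * Q * i} = {i \<in> {1..I}. 35 dvd 1 + 2 * Q * i}" by blast
  qed
  have d105: "D 3 \<inter> D 5 \<inter> D 7 = D 105" unfolding D_def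
  proof -
    have "\<And>n::nat. 3 dvd n \<and> 5 dvd n \<and> 7 dvd n \<longleftrightarrow> 105 dvd n" by presburger
    thus "{i \<in> {1..I}. 3 dvd 1 + 2 * Q * i} \<inter> {i \<in> {1..I}. 5 dvd 1 + 2 * Q * i} \<inter> {i \<in> {1..I}. 7 dvd 1 + 2 * Q * i} = {i \<in> {1..I}. 105 dvd 1 + 2 * Q * i}" by blast
  qed
  have G: "{i\<in>{1..I}. \<not> 3 dvd 1+2*Q*i \<and> \<not> 5 dvd 1+2*Q*i \<and> \<not> 7 dvd 1+2*Q*i} = {1..I} - (D 3 \<union> D 5 \<union> D 7)"
    unfolding D_def by blast
  have fin: "finite (D d)" for d unfolding D_def by simp
  have subU: "D 3 \<union> D 5 \<union> D 7 \<subseteq> {1..I}" unfolding D_def by blast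
  have cG: "card ({1..I} - (D 3 \<union> D 5 \<union> D 7)) = I - card (D 3 \<union> D 5 \<union> D 7)"
    using card_Diff_subset[OF _ subU] fin by simp
  have le: "card (D 3 \<union> D 5 \<union> D 7) \<le> I" using card_mono[OF _ subU] by simp
  have ie: "int (card (D 3 \<union> D 5 \<union> D 7)) = int (card (D 3)) + int (card (D 5)) + int (card (D 7)) - int (card (D 15)) - int (card (D 21)) - int (card (D 35)) + int (card (D 105))"
    using incl_excl3[OF fin fin fin] d15 d21 d35 d105 by simp
  have l3: "I div 3 \<le> card (D 3)" unfolding D_def by (rule cnt_lower[OF c3]) simp
  have l5: "I div 5 \<le> card (D 5)" unfolding D_def by (rule cnt_lower[OF c5]) simp
  have l7: "I div 7 \<le> card (D 7)" unfolding D_def by (rule cnt_lower[OF c7]) simp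
  have l105: "I div 105 \<le> card (D 105)" unfolding D_def by (rule cnt_lower[OF c105]) simp
  have u15: "15 * card (D 15) \<le> I + 15" unfolding D_def by (rule cnt_upper[OF c15]) simp
  have u21: "21 * card (D 21) \<le> I + 21" unfolding D_def by (rule cnt_upper[OF c21]) simp
  have u35: "35 * card (D 35) \<le> I + 35" unfolding D_def by (rule cnt_upper[OF c35]) simp
  have m3: "I \<le> 3 * (I div 3) + 2" by simp
  have m5: "I \<le> 5 * (I div 5) + 4" by simp
  have m7: "I \<le> 7 * (I div 7) + 6" by simp
  have m105: "I \<le> 105 * (I div 105) + 104" by simp
  show ?thesis unfolding G cG using ie le l3 l5 l7 l105 u15 u21 u35 m3 m5 m7 m105 by linarith
qed



lemma card_Ak:
  fixes q a k :: nat
  assumes q: "prime q" "q > 7" and k: "k \<ge> 1"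
  shows "105 * card {p. prime p \<and> p \<le> a \<and> q^k dvd p - 1} \<le> 48*(a div (2*q^k)) + 735"
proof -
  define Q where "Q = q^k"
  define I where "I = a div (2*Q)"
  let ?A = "{p. prime p \<and> p \<le> a \<and> q^k dvd p - 1}"
  let ?G = "{i\<in>{1..I}. \<not> 3 dvd 1+2*Q*i \<and> \<not> 5 dvd 1+2*Q*i \<and> \<not> 7 dvd 1+2*Q*i}"
  have Qq: "q \<le> Q" unfolding Q_def using k q
    using power_increasing[of 1 k q] by simp
  have cq: "coprime q r" if "prime r" "r \<le> 7" for r :: nat
    using q that primes_coprime[of q r] by auto
  have c2: "coprime q 2" using cq[of 2] by simp
  have c2Q: "coprime 2 Q" unfolding Q_def using c2 by (simp add: coprime_power_right_iff coprime_commute)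
  have cQ: "coprime (2*Q) r" if "prime r" "r \<le> 7" "r \<noteq> 2" for r :: nat
  proof -
    have "coprime 2 r" using that primes_coprime[of 2 r] by simp
    moreover have "coprime Q r" unfolding Q_def using cq[OF that(1,2)] by (simp add: coprime_power_left_iff)
    ultimately show ?thesis by simp
  qed
  have cnt: "105 * card ?G \<le> 48*I + 735"
    by (rule cnt_good; rule cQ) simp_all
  have main: "\<And>p. p \<in> ?A \<Longrightarrow> p = 1 + 2*Q*((p - 1) div (2*Q)) \<and> (p - 1) div (2*Q) \<in> ?G"
  proof -
    fix p assume "p \<in> ?A"
    hence p: "prime p" "p \<le> a" "Q dvd p - 1" unfolding Q_def by auto
    have p2: "p \<ge> 2" using p prime_ge_2_nat by blast
    have "Q \<le> p - 1" using p(3) p2 by (intro dvd_imp_le) auto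
    hence p12: "p > 7" using Qq q by linarith
    have "odd p" using p(1) p12 prime_odd_nat by auto
    hence "2 dvd p - 1" using p2 by presburger
    moreover have "coprime 2 Q" using c2Q .
    ultimately have "2*Q dvd p - 1" using p(3) by (simp add: divides_mult)
    then obtain i where i: "p - 1 = 2*Q*i" by blast
    have Qpos: "Q > 0" using Qq q by linarith
    have iv: "(p - 1) div (2*Q) = i" using i Qpos by simp
    have pe: "p = 1 + 2*Q*i" using i p2 by linarith
    have "i \<ge> 1" using pe p12 by (cases i) auto
    moreover have "i \<le> I" unfolding I_def
    proof -
      have "2*Q*i \<le> a" using pe p by linarith
      hence "(2*Q*i) div (2*Q) \<le> a div (2*Q)" by (rule div_le_mono)
      thus "i \<le> a div (2*Q)" using Qpos by simp
    qed
    moreover have "\<not> r dvd p" if "r \<in> {3,5,7}" for r :: nat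
    proof
      assume "r dvd p"
      moreover have "prime r" using that by auto
      ultimately have "r = p" using p(1) primes_dvd_imp_eq by blast
      thus False using that p12 by auto
    qed
    ultimately show "p = 1 + 2*Q*((p - 1) div (2*Q)) \<and> (p - 1) div (2*Q) \<in> ?G"
      using iv pe by auto
  qed
  have inj: "inj_on (\<lambda>p. (p - 1) div (2*Q)) ?A"
  proof (rule inj_onI)
    fix x y assume x: "x \<in> ?A" and y: "y \<in> ?A" and e: "(x - 1) div (2*Q) = (y - 1) div (2*Q)"
    have "x = 1 + 2*Q*((x - 1) div (2*Q))" using main[OF x] by blast
    also have "\<dots> = 1 + 2*Q*((y - 1) div (2*Q))" using e by simp
    also have "\<dots> = y" using main[OF y] by simp
    finally show "x = y" .
  qed
  have sub: "(\<lambda>p. (p - 1) div (2*Q)) ` ?A \<subseteq> ?G" using main by auto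
  have "card ?A \<le> card ?G"
    using card_image[OF inj] card_mono[OF _ sub] by simp
  thus ?thesis using cnt unfolding I_def Q_def by linarith
qed


lemma mult_as_card:
  fixes q n a :: nat
  assumes q: "prime q" and n: "n > 0" "n < a"
  shows "multiplicity q n = card {k\<in>{1..a}. q^k dvd n}"
proof -
  define m where "m = multiplicity q n"
  have nu: "\<not> is_unit q" using prime_gt_1_nat[OF q] by simp
  have n0: "n \<noteq> 0" using n by simp
  have iff: "q^k dvd n \<longleftrightarrow> k \<le> m" for k
    unfolding m_def by (rule power_dvd_iff_le_multiplicity[OF n0 nu])
  have "q^m dvd n" using iff by simp
  hence "q^m \<le> n" using n0 by (intro dvd_imp_le) simp_all
  moreover have "m < q^m"
  proof -
    have "m < 2^m" by (rule less_exp)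
    also have "(2::nat)^m \<le> q^m" using prime_ge_2_nat[OF q] by (rule power_mono) simp
    finally show ?thesis .
  qed
  ultimately have "m \<le> a" using n by linarith
  have "{k\<in>{1..a}. q^k dvd n} = {1..m}"
  proof (rule set_eqI)
    fix k show "k \<in> {k\<in>{1..a}. q^k dvd n} \<longleftrightarrow> k \<in> {1..m}"
      using iff[of k] \<open>m \<le> a\<close> by auto
  qed
  thus ?thesis unfolding m_def by simp
qed



lemma geom_bound:
  fixes q :: real and n :: nat
  assumes "q > 1"
  shows "(\<Sum>k=1..n. (1/q)^k) \<le> 1/(q-1)"
proof -
  have x: "1/q \<noteq> 1" "1/q < 1" "1/q > 0" using assms by auto
  have "(\<Sum>k=1..n. (1/q)^k) = (if n < 1 then 0 else ((1/q)^1 - (1/q)^Suc n)/(1 - 1/q))"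
    using sum_gp[of "1/q" 1 n] x by simp
  also have "\<dots> \<le> (1/q)/(1 - 1/q)"
  proof -
    have h: "(1/q)^1 - (1/q)^Suc n \<le> (1/q)" using x by simp
    have "((1/q)^1 - (1/q)^Suc n)/(1 - 1/q) \<le> (1/q)/(1 - 1/q)"
      by (rule divide_right_mono[OF h]) (use x in simp)
    thus ?thesis using x by simp
  qed
  also have "\<dots> = 1/(q-1)" using assms by (simp add: field_simps)
  finally show ?thesis .
qed




lemma log_count:
  fixes q a :: nat
  assumes q: "q > 1" and a: "a > 0"
  shows "real (card {k\<in>{1..a}. q^k \<le> a}) \<le> ln (real a) / ln (real q)"
proof -
  define x where "x = ln (real a) / ln (real q)"
  have lq: "ln (real q) > 0" using q by simp
  have x0: "x \<ge> 0" unfolding x_def using a lq by simp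
  have "{k\<in>{1..a}. q^k \<le> a} \<subseteq> {1..nat \<lfloor>x\<rfloor>}"
  proof
    fix k assume "k \<in> {k\<in>{1..a}. q^k \<le> a}"
    hence k: "k \<ge> 1" "q^k \<le> a" by auto
    have "real (q^k) \<le> real a" using k by simp
    hence "ln (real (q^k)) \<le> ln (real a)" using q a by (subst ln_le_cancel_iff) auto
    hence "real k * ln (real q) \<le> ln (real a)" using q by (simp add: ln_realpow)
    hence "real k \<le> x" unfolding x_def using lq by (simp add: field_simps)
    hence "int k \<le> \<lfloor>x\<rfloor>" by (simp add: le_floor_iff)
    thus "k \<in> {1..nat \<lfloor>x\<rfloor>}" using k by auto
  qed
  hence "card {k\<in>{1..a}. q^k \<le> a} \<le> nat \<lfloor>x\<rfloor>"
    using card_mono[of "{1..nat \<lfloor>x\<rfloor>}"] by fastforce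
  hence "real (card {k\<in>{1..a}. q^k \<le> a}) \<le> real (nat \<lfloor>x\<rfloor>)" by simp
  also have "\<dots> \<le> x" using x0 by linarith
  finally show ?thesis unfolding x_def .
qed




theorem lemma5p1:
  fixes q a :: nat
  assumes "prime q" and "q > 7" and "a > 0"
  shows "real (multiplicity q (\<Prod>p\<in>{p. prime p \<and> p \<le> a}. p - 1))
           \<le> 0.23 * real a / (real q - 1) + 7 * ln (real a) / ln (real q)"
proof -
  note q = assms(1) assms(2)
  define P where "P = {p. prime p \<and> p \<le> a}"
  define K where "K = {1..a}"
  define A where "A k = {p. prime p \<and> p \<le> a \<and> q^k dvd p - 1}" for k
  have finP: "finite P" unfolding P_def by (rule finite_subset[of _ "{..a}"]) auto
  have finK: "finite K" unfolding K_def by simp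
  have p2: "p \<ge> 2" if "p \<in> P" for p using that prime_ge_2_nat unfolding P_def by auto
  have M: "multiplicity q (\<Prod>p\<in>P. p - 1) = (\<Sum>p\<in>P. multiplicity q (p - 1))"
  proof (rule prime_elem_multiplicity_prod_distrib)
    show "prime_elem q" using q by blast
    show "0 \<notin> (\<lambda>p. p - 1) ` P" using p2 by force
  qed (rule finP)
  have M2: "multiplicity q (p - 1) = card {k\<in>K. q^k dvd p - 1}" if "p \<in> P" for p
    unfolding K_def
    using mult_as_card[OF q(1), of "p - 1" a] p2[OF that] that unfolding P_def by auto
  have cs: "card {x\<in>B. R x} = (\<Sum>x\<in>B. if R x then 1 else 0)" if "finite B" for B :: "nat set" and R
    using sum.inter_filter[OF that, of "\<lambda>_. (1::nat)" R] by simp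
  have sw: "(\<Sum>p\<in>P. card {k\<in>K. q^k dvd p - 1}) = (\<Sum>k\<in>K. card (A k))"
  proof -
    have "(\<Sum>p\<in>P. card {k\<in>K. q^k dvd p - 1}) = (\<Sum>p\<in>P. \<Sum>k\<in>K. if q^k dvd p - 1 then 1 else 0)"
      using cs[OF finK] by simp
    also have "\<dots> = (\<Sum>k\<in>K. \<Sum>p\<in>P. if q^k dvd p - 1 then 1 else 0)" by (rule sum.swap)
    also have "\<dots> = (\<Sum>k\<in>K. card {p\<in>P. q^k dvd p - 1})" using cs[OF finP] by simp
    also have "\<dots> = (\<Sum>k\<in>K. card (A k))" unfolding A_def P_def by (simp add: conj_assoc)
    finally show ?thesis .
  qed
  have qr: "real q > 1" using q by simp
  define B where "B k = (48/210 * real a * (1/real q)^k) + (if q^k \<le> a then 7 else 0)" for k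
  have bk: "real (card (A k)) \<le> B k" if "k \<in> K" for k
  proof (cases "q^k \<le> a")
    case True
    have k1: "k \<ge> 1" using that unfolding K_def by simp
    have c: "105 * card (A k) \<le> 48*(a div (2*q^k)) + 735" unfolding A_def by (rule card_Ak[OF q k1])
    define D where "D = 2*q^k"
    have Dpos: "real D > 0" unfolding D_def using q by simp
    have "(a div D) * D \<le> a" by simp
    hence "real (a div D) * real D \<le> real a" by (metis of_nat_le_iff of_nat_mult)
    hence ad: "real (a div D) \<le> real a / real D" using Dpos by (simp add: field_simps)
    have "real (105 * card (A k)) \<le> real (48*(a div D) + 735)" using c unfolding D_def
      by (simp only: of_nat_le_iff)
    hence "105 * real (card (A k)) \<le> 48 * real (a div D) + 735" by simp
    hence "105 * real (card (A k)) \<le> 48 * (real a / real D) + 735" using ad by linarith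
    moreover have "real a / real D = 1/2 * real a * (1/real q)^k" unfolding D_def
      by (simp add: power_one_over field_simps)
    ultimately show ?thesis unfolding B_def using True by simp
  next
    case False
    have "A k = {}"
    proof (rule ccontr)
      assume "A k \<noteq> {}"
      then obtain p where p: "prime p" "p \<le> a" "q^k dvd p - 1" unfolding A_def by auto
      have "p \<ge> 2" using p prime_ge_2_nat by blast
      hence "q^k \<le> p - 1" using p by (intro dvd_imp_le) auto
      thus False using False p by linarith
    qed
    thus ?thesis unfolding B_def by simp
  qed
  have "real (multiplicity q (\<Prod>p\<in>P. p - 1)) = (\<Sum>k\<in>K. real (card (A k)))"
    using M M2 sw by simp
  also have "\<dots> \<le> (\<Sum>k\<in>K. B k)" by (rule sum_mono) (rule bk)
  also have "\<dots> = 48/210 * real a * (\<Sum>k\<in>K. (1/real q)^k) + (\<Sum>k\<in>K. if q^k \<le> a then 7 else 0)"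
    unfolding B_def by (simp add: sum.distrib sum_distrib_left)
  also have "(\<Sum>k\<in>K. if q^k \<le> a then 7 else 0) = 7 * real (card {k\<in>K. q^k \<le> a})"
    using sum.inter_filter[OF finK, of "\<lambda>_. (7::real)" "\<lambda>k. q^k \<le> a"] by simp
  also have "(\<Sum>k\<in>K. (1/real q)^k) \<le> 1/(real q - 1)" unfolding K_def by (rule geom_bound[OF qr])
  hence "48/210 * real a * (\<Sum>k\<in>K. (1/real q)^k) \<le> 48/210 * real a * (1/(real q - 1))"
    by (intro mult_left_mono) auto
  also have "48/210 * real a * (1/(real q - 1)) \<le> 0.23 * real a / (real q - 1)"
  proof -
    have "48/210 * real a \<le> 0.23 * real a" by simp
    hence "(48/210 * real a) / (real q - 1) \<le> 0.23 * real a / (real q - 1)"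
      by (rule divide_right_mono) (use qr in simp)
    thus ?thesis by simp
  qed
  also have "real (card {k\<in>K. q^k \<le> a}) \<le> ln (real a) / ln (real q)"
    unfolding K_def using log_count[of q a] q assms(3) by simp
  finally show ?thesis unfolding P_def by simp
qed

end
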